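(* Let $C\ge 4$. There is a constant $K\ge1$ depending only on $C$ such that for every integer $N\ge 3$ and every $C$-uniformly convex sequence $\{a_n\}_{n=1}^N$, there exists a $C^2$ function $f$ on $[\frac1N,1]$ with $f(\frac nN)=a_n$ for $1\le n\le N$ and $K^{-1}\le f'(x)\le K$, $K^{-1}\le f''(x)\le K$ for all $x$ in its domain.
   Context: A real sequence $\{a_n\}_{n=1}^N$ is called $C$-uniformly convex if for all admissible $n$: $a_{n+1}-a_n\in[\frac{1}{CN},\frac{C}{N}]$ and $(a_{n+2}-a_{n+1})-(a_{n+1}-a_n)\in[\frac{1}{CN^2},\frac{C}{N^2}]$ (for $C=4$ this is the paper's notion of a uniformly convex sequence with parameter $N$). *)

theory Defs
  imports "HOL-Analysis.Analysis"
begin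

definition unif_convex :: "real \<Rightarrow> nat \<Rightarrow> (nat \<Rightarrow> real) \<Rightarrow> bool" where
  "unif_convex C N a \<longleftrightarrow>
     (\<forall>n. 1 \<le> n \<and> n + 1 \<le> N \<longrightarrow>
        1 / (C * real N) \<le> a (n+1) - a n \<and> a (n+1) - a n \<le> C / real N) \<and>
     (\<forall>n. 1 \<le> n \<and> n + 2 \<le> N \<longrightarrow>
        1 / (C * (real N)^2) \<le> (a (n+2) - a (n+1)) - (a (n+1) - a n) \<and>
        (a (n+2) - a (n+1)) - (a (n+1) - a n) \<le> C / (real N)^2)"

end

theory Submission
  imports Defs
begin


definition phiL :: "nat \<Rightarrow> real \<Rightarrow> real" where
  "phiL j t = (1-t)^j - (1-t)^(j+1)"
definition PhiL :: "nat \<Rightarrow> real \<Rightarrow> real" where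
  "PhiL j t = (1-t)^(j+2)/(real j+2) - (1-t)^(j+1)/(real j+1) + 1/(real j+1) - 1/(real j+2)"
definition PsiL :: "nat \<Rightarrow> real \<Rightarrow> real" where
  "PsiL j t = (1-t)^(j+2)/((real j+1)*(real j+2)) - (1-t)^(j+3)/((real j+2)*(real j+3))
     + (1/(real j+1) - 1/(real j+2)) * t - 1/((real j+1)*(real j+2)) + 1/((real j+2)*(real j+3))"
definition phiR :: "nat \<Rightarrow> real \<Rightarrow> real" where
  "phiR j t = t^j - t^(j+1)"
definition PhiR :: "nat \<Rightarrow> real \<Rightarrow> real" where
  "PhiR j t = t^(j+1)/(real j+1) - t^(j+2)/(real j+2)"
definition PsiR :: "nat \<Rightarrow> real \<Rightarrow> real" where
  "PsiR j t = t^(j+2)/((real j+1)*(real j+2)) - t^(j+3)/((real j+2)*(real j+3))"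

lemma dL: "m = Suc n \<Longrightarrow> ((\<lambda>t. (1-t)^m / c) has_real_derivative (-(real m) * (1-t)^n / c)) (at t)"
proof -
  assume m: "m = Suc n"
  have "((\<lambda>t. 1 - t) has_real_derivative (0 - 1)) (at t)" by (intro DERIV_diff DERIV_const DERIV_ident)
  from DERIV_cdivide[OF DERIV_power_Suc[OF this, of n], of c]
  show ?thesis unfolding m by (simp add: algebra_simps)
qed
lemma dR: "m = Suc n \<Longrightarrow> ((\<lambda>t. t^m / c) has_real_derivative ((real m) * t^n / c)) (at t)"
proof -
  assume m: "m = Suc n"
  from DERIV_cdivide[OF DERIV_power_Suc[OF DERIV_ident, where n=n], of c]
  show ?thesis unfolding m by (simp add: algebra_simps)
qed

lemma d_PhiL: "(PhiL j has_real_derivative phiL j t) (at t)"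
proof -
  have "((\<lambda>t. (1-t)^(j+2)/(real j+2) - (1-t)^(j+1)/(real j+1) + 1/(real j+1) - 1/(real j+2)) has_real_derivative
    (-(real (j+2)) * (1-t)^(j+1) / (real j+2) - (-(real (j+1)) * (1-t)^j / (real j+1)) + 0 - 0)) (at t)"
    by (intro DERIV_diff DERIV_add DERIV_const dL) auto
  moreover have "(-(real (j+2)) * (1-t)^(j+1) / (real j+2) - (-(real (j+1)) * (1-t)^j / (real j+1)) + 0 - 0) = phiL j t"
    unfolding phiL_def by (simp add: divide_simps; simp add: algebra_simps)
  ultimately show ?thesis unfolding PhiL_def[abs_def] by simp
qed

lemma d_PsiL: "(PsiL j has_real_derivative PhiL j t) (at t)"
proof -
  have "((\<lambda>t. (1-t)^(j+2)/((real j+1)*(real j+2)) - (1-t)^(j+3)/((real j+2)*(real j+3))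
     + (1/(real j+1) - 1/(real j+2)) * t - 1/((real j+1)*(real j+2)) + 1/((real j+2)*(real j+3))) has_real_derivative
    (-(real (j+2)) * (1-t)^(j+1) / ((real j+1)*(real j+2)) - (-(real (j+3)) * (1-t)^(j+2) / ((real j+2)*(real j+3)))
      + (1/(real j+1) - 1/(real j+2)) * 1 - 0 + 0)) (at t)"
    by (intro DERIV_diff DERIV_add DERIV_const dL DERIV_cmult DERIV_ident) auto
  moreover have "(-(real (j+2)) * (1-t)^(j+1) / ((real j+1)*(real j+2)) - (-(real (j+3)) * (1-t)^(j+2) / ((real j+2)*(real j+3)))
      + (1/(real j+1) - 1/(real j+2)) * 1 - 0 + 0) = PhiL j t"
    unfolding PhiL_def by (simp add: divide_simps; simp add: algebra_simps)
  ultimately show ?thesis unfolding PsiL_def[abs_def] by simp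
qed

lemma d_PhiR: "(PhiR j has_real_derivative phiR j t) (at t)"
proof -
  have "((\<lambda>t. t^(j+1)/(real j+1) - t^(j+2)/(real j+2)) has_real_derivative
    ((real (j+1)) * t^j / (real j+1) - ((real (j+2)) * t^(j+1) / (real j+2)))) (at t)"
    by (intro DERIV_diff dR) auto
  moreover have "((real (j+1)) * t^j / (real j+1) - ((real (j+2)) * t^(j+1) / (real j+2))) = phiR j t"
    unfolding phiR_def by (simp add: divide_simps; simp add: algebra_simps)
  ultimately show ?thesis unfolding PhiR_def[abs_def] by simp
qed

lemma d_PsiR: "(PsiR j has_real_derivative PhiR j t) (at t)"
proof -
  have "((\<lambda>t. t^(j+2)/((real j+1)*(real j+2)) - t^(j+3)/((real j+2)*(real j+3))) has_real_derivative
    ((real (j+2)) * t^(j+1) / ((real j+1)*(real j+2)) - ((real (j+3)) * t^(j+2) / ((real j+2)*(real j+3))))) (at t)"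
    by (intro DERIV_diff dR) auto
  moreover have "((real (j+2)) * t^(j+1) / ((real j+1)*(real j+2)) - ((real (j+3)) * t^(j+2) / ((real j+2)*(real j+3)))) = PhiR j t"
    unfolding PhiR_def by (simp add: divide_simps; simp add: algebra_simps)
  ultimately show ?thesis unfolding PsiR_def[abs_def] by simp
qed

lemma vals:
  assumes "j \<ge> 1"
  shows "phiL j 0 = 0" "phiL j 1 = 0" "phiR j 0 = 0" "phiR j 1 = 0"
    "PhiL j 0 = 0" "PhiR j 0 = 0" "PsiL j 0 = 0" "PsiR j 0 = 0"
    "PhiL j 1 = 1/((real j+1)*(real j+2))" "PhiR j 1 = 1/((real j+1)*(real j+2))"
    "PsiR j 1 = 1/((real j+1)*(real j+2)) * (2/(real j+3))"
    "PsiL j 1 = 1/((real j+1)*(real j+2)) * (1 - 2/(real j+3))"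
  using assms by (auto simp: phiL_def phiR_def PhiL_def PhiR_def PsiL_def PsiR_def divide_simps power_0_left) (simp_all add: algebra_simps)

lemma phi_bounds:
  assumes "0 \<le> t" "t \<le> 1"
  shows "0 \<le> phiL j t" "phiL j t \<le> 1" "0 \<le> phiR j t" "phiR j t \<le> 1"
proof -
  have e1: "phiL j t = t * (1-t)^j" unfolding phiL_def by (simp add: algebra_simps)
  have e2: "phiR j t = t^j * (1-t)" unfolding phiR_def by (simp add: algebra_simps)
  have a: "0 \<le> (1-t)^j" "(1-t)^j \<le> 1" "0 \<le> t^j" "t^j \<le> 1" using assms
    by (auto intro: power_le_one)
  show "0 \<le> phiL j t" "phiL j t \<le> 1" "0 \<le> phiR j t" "phiR j t \<le> 1"
    unfolding e1 e2 using a assms by (auto intro: mult_le_one)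
qed



definition mm :: "nat \<Rightarrow> real" where "mm j = 1/((real j+1)*(real j+2))"
definition bb :: "nat \<Rightarrow> real" where "bb j = 2/(real j+3)"
definition pc :: "nat \<Rightarrow> real \<Rightarrow> real \<Rightarrow> real \<Rightarrow> real" where
  "pc j \<tau> A B = ((A-\<tau>)*(1-bb j) - bb j*(B-\<tau>))/(2*mm j*(1-2*bb j))"
definition rc :: "nat \<Rightarrow> real \<Rightarrow> real \<Rightarrow> real \<Rightarrow> real" where
  "rc j \<tau> A B = ((B-\<tau>)*(1-bb j) - bb j*(A-\<tau>))/(2*mm j*(1-2*bb j))"
definition Pc :: "nat \<Rightarrow> real \<Rightarrow> real \<Rightarrow> real \<Rightarrow> real \<Rightarrow> real" where
  "Pc j \<tau> A B t = \<tau> + pc j \<tau> A B * phiL j t + rc j \<tau> A B * phiR j t"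
definition Gc :: "nat \<Rightarrow> real \<Rightarrow> real \<Rightarrow> real \<Rightarrow> real \<Rightarrow> real" where
  "Gc j \<tau> A B t = -A/2 + \<tau>*t + pc j \<tau> A B * PhiL j t + rc j \<tau> A B * PhiR j t"
definition Qc :: "nat \<Rightarrow> real \<Rightarrow> real \<Rightarrow> real \<Rightarrow> real \<Rightarrow> real" where
  "Qc j \<tau> A B t = -A/2*t + \<tau>*t^2/2 + pc j \<tau> A B * PsiL j t + rc j \<tau> A B * PsiR j t"

lemma d_Qc: "(Qc j \<tau> A B has_real_derivative Gc j \<tau> A B t) (at t)"
proof -
  have "((\<lambda>t. -A/2*t + \<tau>*t^2/2 + pc j \<tau> A B * PsiL j t + rc j \<tau> A B * PsiR j t) has_real_derivative
     (-A/2*1 + \<tau>*(real (Suc 1) * t^1)/2 + pc j \<tau> A B * PhiL j t + rc j \<tau> A B * PhiR j t)) (at t)"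
    by (intro DERIV_add DERIV_cmult DERIV_cdivide DERIV_ident d_PsiL d_PsiR dR) (auto intro!: derivative_eq_intros)
  then show ?thesis unfolding Qc_def[abs_def] Gc_def by (simp add: algebra_simps)
qed

lemma d_Gc: "(Gc j \<tau> A B has_real_derivative Pc j \<tau> A B t) (at t)"
proof -
  have "((\<lambda>t. -A/2 + \<tau>*t + pc j \<tau> A B * PhiL j t + rc j \<tau> A B * PhiR j t) has_real_derivative
     (0 + \<tau>*1 + pc j \<tau> A B * phiL j t + rc j \<tau> A B * phiR j t)) (at t)"
    by (intro DERIV_add DERIV_cmult DERIV_const DERIV_ident d_PhiL d_PhiR)
  then show ?thesis unfolding Gc_def[abs_def] Pc_def by (simp add: algebra_simps)
qed

lemma cont_Pc: "continuous_on S (Pc j \<tau> A B)"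
  unfolding Pc_def[abs_def] phiL_def phiR_def by (intro continuous_intros)

lemma cell:
  fixes j :: nat and \<tau> A B K0 :: real
  assumes j: "j \<ge> 2" and tau: "\<tau> > 0" and hb: "bb j * (\<tau> + K0) \<le> \<tau>"
    and A: "2*\<tau> \<le> A" "A \<le> K0" and B: "2*\<tau> \<le> B" "B \<le> K0"
  shows "Qc j \<tau> A B 0 = 0" "Qc j \<tau> A B 1 = 0" "Gc j \<tau> A B 0 = -A/2" "Gc j \<tau> A B 1 = B/2"
    "Pc j \<tau> A B 0 = \<tau>" "Pc j \<tau> A B 1 = \<tau>"
    "\<And>t. 0 \<le> t \<Longrightarrow> t \<le> 1 \<Longrightarrow> \<tau> \<le> Pc j \<tau> A B t"
    "\<And>t. 0 \<le> t \<Longrightarrow> t \<le> 1 \<Longrightarrow> Pc j \<tau> A B t \<le> \<tau> + (A+B)*(real j+1)*(real j+2)/2"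
    "\<And>t. 0 \<le> t \<Longrightarrow> t \<le> 1 \<Longrightarrow> -A/2 \<le> Gc j \<tau> A B t"
    "\<And>t. 0 \<le> t \<Longrightarrow> t \<le> 1 \<Longrightarrow> Gc j \<tau> A B t \<le> B/2"
proof -
  have j1: "j \<ge> 1" using j by simp
  note v = vals[OF j1]
  have m0: "mm j > 0" unfolding mm_def by simp
  have b0: "bb j > 0" unfolding bb_def by simp
  have b1: "bb j \<le> 2/5" unfolding bb_def using j by (simp add: divide_simps)
  have d0: "2*mm j*(1-2*bb j) > 0" using m0 b1 by simp
  have sum: "pc j \<tau> A B + rc j \<tau> A B = (A+B-2*\<tau>)/(2*mm j)"
    unfolding pc_def rc_def using d0 m0 b1 by (simp add: divide_simps) (simp add: algebra_simps)
  have mom: "(1-bb j)*pc j \<tau> A B + bb j * rc j \<tau> A B = (A-\<tau>)/(2*mm j)"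
    unfolding pc_def rc_def using d0 m0 b1 by (simp add: divide_simps) (simp add: algebra_simps)
  have pnn: "pc j \<tau> A B \<ge> 0"
  proof -
    have "(A-\<tau>)*(1-bb j) \<ge> \<tau>*(1-bb j)" using A b1 by (intro mult_right_mono) auto
    moreover have "bb j*(B-\<tau>) \<le> bb j * K0" using B b0 tau by (intro mult_left_mono) auto
    ultimately have "(A-\<tau>)*(1-bb j) - bb j*(B-\<tau>) \<ge> 0" using hb by (simp add: algebra_simps)
    then show ?thesis unfolding pc_def using d0 by simp
  qed
  have rnn: "rc j \<tau> A B \<ge> 0"
  proof -
    have "(B-\<tau>)*(1-bb j) \<ge> \<tau>*(1-bb j)" using B b1 by (intro mult_right_mono) auto
    moreover have "bb j*(A-\<tau>) \<le> bb j * K0" using A b0 tau by (intro mult_left_mono) auto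
    ultimately have "(B-\<tau>)*(1-bb j) - bb j*(A-\<tau>) \<ge> 0" using hb by (simp add: algebra_simps)
    then show ?thesis unfolding rc_def using d0 by simp
  qed
  have mv: "1/((real j+1)*(real j+2)) = mm j" unfolding mm_def by simp
  have bv: "2/(real j+3) = bb j" unfolding bb_def by simp
  have v2: "PsiR j 1 = mm j * bb j" "PsiL j 1 = mm j * (1 - bb j)" "PhiL j 1 = mm j" "PhiR j 1 = mm j"
    using v(9-12) unfolding mm_def bb_def by simp_all
  show "Qc j \<tau> A B 0 = 0" "Gc j \<tau> A B 0 = -A/2" "Pc j \<tau> A B 0 = \<tau>" "Pc j \<tau> A B 1 = \<tau>"
    unfolding Qc_def Gc_def Pc_def using v by simp_all
  have "Gc j \<tau> A B 1 = -A/2 + \<tau> + (pc j \<tau> A B + rc j \<tau> A B) * mm j"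
    unfolding Gc_def using v mv by (simp add: algebra_simps)
  then show "Gc j \<tau> A B 1 = B/2" using sum m0 by (simp add: field_simps)
  have "Qc j \<tau> A B 1 = -A/2 + \<tau>/2 + ((1-bb j)*pc j \<tau> A B + bb j * rc j \<tau> A B) * mm j"
    unfolding Qc_def v2 by (simp add: algebra_simps)
  then show "Qc j \<tau> A B 1 = 0" using mom m0 by (simp add: field_simps)
  fix t :: real assume t: "0 \<le> t" "t \<le> 1"
  note pb = phi_bounds[OF t, of j]
  have "0 \<le> pc j \<tau> A B * phiL j t" "0 \<le> rc j \<tau> A B * phiR j t"
    using pnn rnn pb by auto
  then show "\<tau> \<le> Pc j \<tau> A B t" unfolding Pc_def by simp
  have "pc j \<tau> A B * phiL j t \<le> pc j \<tau> A B" "rc j \<tau> A B * phiR j t \<le> rc j \<tau> A B"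
    using pnn rnn pb by (auto intro: mult_left_le)
  then have "Pc j \<tau> A B t \<le> \<tau> + (A+B-2*\<tau>)/(2*mm j)" unfolding Pc_def using sum by simp
  also have "\<dots> \<le> \<tau> + (A+B)*(real j+1)*(real j+2)/2" unfolding mm_def using tau
    by (simp add: divide_simps mult_right_mono)
  finally show "Pc j \<tau> A B t \<le> \<tau> + (A+B)*(real j+1)*(real j+2)/2" .
  have pp: "\<And>x. x \<in> {0..1} \<Longrightarrow> Pc j \<tau> A B x \<ge> 0"
  proof -
    fix x :: real assume "x \<in> {0..1}"
    then have "0 \<le> pc j \<tau> A B * phiL j x" "0 \<le> rc j \<tau> A B * phiR j x"
      using pnn rnn phi_bounds[of x j] by auto
    then show "Pc j \<tau> A B x \<ge> 0" unfolding Pc_def using tau by simp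
  qed
  have "Gc j \<tau> A B 0 \<le> Gc j \<tau> A B t"
    by (rule deriv_nonneg_imp_mono[of 0 t "Gc j \<tau> A B" "Pc j \<tau> A B"]) (use d_Gc pp t in auto)
  then show "-A/2 \<le> Gc j \<tau> A B t" using v unfolding Gc_def by simp
  have "Gc j \<tau> A B t \<le> Gc j \<tau> A B 1"
    by (rule deriv_nonneg_imp_mono[of t 1 "Gc j \<tau> A B" "Pc j \<tau> A B"]) (use d_Gc pp t in auto)
  then show "Gc j \<tau> A B t \<le> B/2" using \<open>Gc j \<tau> A B 1 = B/2\<close> by simp
qed



lemma triv_deriv:
  fixes f :: "real \<Rightarrow> real"
  assumes "x \<notin> S" "closed S"
  shows "(f has_real_derivative D) (at x within S)"
proof -
  have "trivial_limit (at x within S)"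
    using assms by (intro not_in_closure_trivial_limitI) (simp add: closure_closed)
  then show ?thesis unfolding has_field_derivative_iff by simp
qed

lemma deriv_Un:
  fixes f :: "real \<Rightarrow> real"
  assumes "(f has_real_derivative D) (at x within S)" "(f has_real_derivative D) (at x within T)"
  shows "(f has_real_derivative D) (at x within S \<union> T)"
  using assms unfolding has_field_derivative_iff Lim_within_Un by simp

definition KK :: "real \<Rightarrow> nat \<Rightarrow> real" where "KK C j = 2*C + C*(real j+1)*(real j+2)"

context
  fixes C :: real and N :: nat and a :: "nat \<Rightarrow> real" and j :: nat
  assumes C4: "C \<ge> 4" and N3: "N \<ge> 3" and uc: "unif_convex C N a" and jdef: "j = nat \<lceil>4*C^2\<rceil>"
begin

definition "tau0 = 1/(2*C)"
definition "ee n = real N^2 * ((a(n+2) - a(n+1)) - (a(n+1) - a n))"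
definition "AA n = (if n = 1 then 1/C else ee (n-1))"
definition "BB n = (if n = N-1 then 1/C else ee n)"
definition "tt n x = real N * x - real n"
definition "FF n x = a n + (a(n+1) - a n) * tt n x + Qc j tau0 (AA n) (BB n) (tt n x) / (real N)^2"
definition "FF1 n x = real N * (a(n+1) - a n) + Gc j tau0 (AA n) (BB n) (tt n x) / real N"
definition "FF2 n x = Pc j tau0 (AA n) (BB n) (tt n x)"
definition "ci x = min (N-1) (nat \<lfloor>real N * x\<rfloor>)"
definition "ff x = FF (ci x) x"
definition "ff1 x = FF1 (ci x) x"
definition "ff2 x = FF2 (ci x) x"

lemma Npos: "real N \<ge> 3" using N3 by simp

lemma ee_bounds: assumes "1 \<le> n" "n+2 \<le> N" shows "1/C \<le> ee n" "ee n \<le> C"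
proof -
  have h: "1 / (C * (real N)^2) \<le> (a (n+2) - a (n+1)) - (a (n+1) - a n)"
     "(a (n+2) - a (n+1)) - (a (n+1) - a n) \<le> C / (real N)^2"
    using uc assms unfolding unif_convex_def by auto
  have N2: "(real N)^2 > 0" using Npos by simp
  from mult_left_mono[OF h(1), of "(real N)^2"] N2 C4
  show "1/C \<le> ee n" unfolding ee_def by (simp add: field_simps)
  from mult_left_mono[OF h(2), of "(real N)^2"] N2 C4
  show "ee n \<le> C" unfolding ee_def by (simp add: field_simps)
qed

lemma d_bounds: assumes "1 \<le> n" "n+1 \<le> N" shows "1/C \<le> real N * (a(n+1) - a n)" "real N * (a(n+1) - a n) \<le> C"
proof -
  have h: "1 / (C * real N) \<le> a (n+1) - a n" "a (n+1) - a n \<le> C / real N"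
    using uc assms unfolding unif_convex_def by auto
  have N2: "real N > 0" using Npos by simp
  from mult_left_mono[OF h(1), of "real N"] N2 C4
  show "1/C \<le> real N * (a(n+1) - a n)" by (simp add: field_simps)
  from mult_left_mono[OF h(2), of "real N"] N2 C4
  show "real N * (a(n+1) - a n) \<le> C" by (simp add: field_simps)
qed

lemma AB_bounds: assumes "1 \<le> n" "n+1 \<le> N"
  shows "1/C \<le> AA n" "AA n \<le> C" "1/C \<le> BB n" "BB n \<le> C"
proof -
  have "1/C \<le> 1" using C4 by simp
  then have c1: "1/C \<le> C" using C4 by linarith
  show "1/C \<le> AA n" "AA n \<le> C" unfolding AA_def using ee_bounds[of "n-1"] assms c1 by auto
  show "1/C \<le> BB n" "BB n \<le> C" unfolding BB_def using ee_bounds[of "n"] assms c1 by auto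
qed

lemma jbounds: "j \<ge> 2" "bb j * (tau0 + C) \<le> tau0"
proof -
  have jr: "real j \<ge> 4*C^2" unfolding jdef by linarith
  have "C*C \<ge> 4*4" using C4 by (intro mult_mono) auto
  then have c16: "C^2 \<ge> 16" by (simp add: power2_eq_square)
  then show "j \<ge> 2" using jr by linarith
  have "2*(1 + 2*C^2) = 2 + 4*C^2" by simp
  then have h: "2*(1 + 2*C^2) \<le> real j + 3" using jr by linarith
  have C0: "C > 0" using C4 by simp
  have "bb j * (tau0 + C) = (2*(1 + 2*C^2)) / ((real j+3)*(2*C))"
    unfolding bb_def tau0_def using C0 by (simp add: field_simps power2_eq_square)
  also have "\<dots> \<le> (real j+3) / ((real j+3)*(2*C))"
    using h C0 by (intro divide_right_mono) auto
  also have "\<dots> = tau0" unfolding tau0_def by simp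
  finally show "bb j * (tau0 + C) \<le> tau0" .
qed

lemma cellN: assumes "1 \<le> n" "n+1 \<le> N"
  shows "Qc j tau0 (AA n) (BB n) 0 = 0" "Qc j tau0 (AA n) (BB n) 1 = 0"
    "Gc j tau0 (AA n) (BB n) 0 = -AA n/2" "Gc j tau0 (AA n) (BB n) 1 = BB n/2"
    "Pc j tau0 (AA n) (BB n) 0 = tau0" "Pc j tau0 (AA n) (BB n) 1 = tau0"
    "\<And>t. 0 \<le> t \<Longrightarrow> t \<le> 1 \<Longrightarrow> tau0 \<le> Pc j tau0 (AA n) (BB n) t"
    "\<And>t. 0 \<le> t \<Longrightarrow> t \<le> 1 \<Longrightarrow> Pc j tau0 (AA n) (BB n) t \<le> tau0 + (AA n+BB n)*(real j+1)*(real j+2)/2"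
    "\<And>t. 0 \<le> t \<Longrightarrow> t \<le> 1 \<Longrightarrow> -AA n/2 \<le> Gc j tau0 (AA n) (BB n) t"
    "\<And>t. 0 \<le> t \<Longrightarrow> t \<le> 1 \<Longrightarrow> Gc j tau0 (AA n) (BB n) t \<le> BB n/2"
proof -
  have t0: "tau0 > 0" "2*tau0 = 1/C" unfolding tau0_def using C4 by auto
  note ab = AB_bounds[OF assms]
  have a1: "2*tau0 \<le> AA n" "AA n \<le> C" "2*tau0 \<le> BB n" "BB n \<le> C" using ab t0 by simp_all
  note c = cell[OF jbounds(1) t0(1) jbounds(2) a1]
  show "Qc j tau0 (AA n) (BB n) 0 = 0" "Qc j tau0 (AA n) (BB n) 1 = 0"
    "Gc j tau0 (AA n) (BB n) 0 = -AA n/2" "Gc j tau0 (AA n) (BB n) 1 = BB n/2"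
    "Pc j tau0 (AA n) (BB n) 0 = tau0" "Pc j tau0 (AA n) (BB n) 1 = tau0"
    "\<And>t. 0 \<le> t \<Longrightarrow> t \<le> 1 \<Longrightarrow> tau0 \<le> Pc j tau0 (AA n) (BB n) t"
    "\<And>t. 0 \<le> t \<Longrightarrow> t \<le> 1 \<Longrightarrow> Pc j tau0 (AA n) (BB n) t \<le> tau0 + (AA n+BB n)*(real j+1)*(real j+2)/2"
    "\<And>t. 0 \<le> t \<Longrightarrow> t \<le> 1 \<Longrightarrow> -AA n/2 \<le> Gc j tau0 (AA n) (BB n) t"
    "\<And>t. 0 \<le> t \<Longrightarrow> t \<le> 1 \<Longrightarrow> Gc j tau0 (AA n) (BB n) t \<le> BB n/2"
    apply (fact c)+ done
qed

lemma glue: assumes "1 \<le> n" "n+2 \<le> N"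
  shows "FF n (real (n+1)/real N) = FF (n+1) (real (n+1)/real N)"
    "FF1 n (real (n+1)/real N) = FF1 (n+1) (real (n+1)/real N)"
    "FF2 n (real (n+1)/real N) = FF2 (n+1) (real (n+1)/real N)"
proof -
  have N0: "real N > 0" using Npos by simp
  have t1: "tt n (real (n+1)/real N) = 1" "tt (n+1) (real (n+1)/real N) = 0"
    unfolding tt_def using N0 by auto
  note c1 = cellN[of n] and c2 = cellN[of "n+1"]
  have A: "AA (n+1) = ee n" "BB n = ee n" unfolding AA_def BB_def using assms by auto
  show "FF n (real (n+1)/real N) = FF (n+1) (real (n+1)/real N)"
    unfolding FF_def t1 using c1 c2 assms by simp
  show "FF2 n (real (n+1)/real N) = FF2 (n+1) (real (n+1)/real N)"
    unfolding FF2_def t1 using c1 c2 assms by simp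
  have g1: "Gc j tau0 (AA n) (BB n) 1 = ee n/2" using cellN(4)[of n] assms A by simp
  have g2: "Gc j tau0 (AA (n+1)) (BB (n+1)) 0 = - (ee n/2)" using cellN(3)[of "n+1"] assms A by simp
  have "FF1 n (real (n+1)/real N) = real N * (a(n+1) - a n) + ee n / 2 / real N"
    unfolding FF1_def t1 g1 by simp
  moreover have "FF1 (n+1) (real (n+1)/real N) = real N * (a(n+1+1) - a (n+1)) - ee n / 2 / real N"
    unfolding FF1_def t1 g2 by simp
  moreover have "n+1+1 = n+2" by simp
  moreover have "ee n / real N = real N * ((a(n+2) - a(n+1)) - (a(n+1) - a n))"
    unfolding ee_def using N0 by (simp add: power2_eq_square)
  ultimately show "FF1 n (real (n+1)/real N) = FF1 (n+1) (real (n+1)/real N)"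
    by (simp add: field_simps)
qed

lemma ci_cell: assumes "1 \<le> n" "n+1 \<le> N" "real n / real N \<le> x" "x \<le> real (n+1) / real N"
  shows "ff x = FF n x" "ff1 x = FF1 n x" "ff2 x = FF2 n x"
proof -
  have N0: "real N > 0" using Npos by simp
  have xs: "real n \<le> real N * x" "real N * x \<le> real n + 1"
    using assms(3,4) N0 by (simp_all add: divide_simps mult.commute)
  have "ci x = n \<or> (ci x = n+1 \<and> x = real (n+1)/real N \<and> n+2 \<le> N)"
  proof (cases "real N * x < real n + 1")
    case True
    then have "\<lfloor>real N * x\<rfloor> = int n" using xs by (simp add: floor_eq_iff)
    then show ?thesis unfolding ci_def using assms by simp
  next
    case False
    then have e: "real N * x = real n + 1" using xs by simp
    then have x: "x = real (n+1)/real N" using N0 by (simp add: field_simps)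
    have "\<lfloor>real N * x\<rfloor> = int (n+1)" using e by simp
    then have "nat \<lfloor>real N * x\<rfloor> = n+1" by simp
    then show ?thesis unfolding ci_def using assms x by auto
  qed
  then show "ff x = FF n x" "ff1 x = FF1 n x" "ff2 x = FF2 n x"
    unfolding ff_def ff1_def ff2_def using glue[of n] assms by auto
qed

lemma dFF: "(FF n has_real_derivative FF1 n x) (at x)" "(FF1 n has_real_derivative FF2 n x) (at x)"
proof -
  have N0: "real N > 0" using Npos by simp
  have dt: "(tt n has_real_derivative real N) (at x)" unfolding tt_def[abs_def]
    by (auto intro!: derivative_eq_intros)
  have cq: "((\<lambda>x. Qc j tau0 (AA n) (BB n) (tt n x)) has_real_derivative Gc j tau0 (AA n) (BB n) (tt n x) * real N) (at x)"
    by (rule DERIV_chain2[OF d_Qc dt])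
  have cg: "((\<lambda>x. Gc j tau0 (AA n) (BB n) (tt n x)) has_real_derivative Pc j tau0 (AA n) (BB n) (tt n x) * real N) (at x)"
    by (rule DERIV_chain2[OF d_Gc dt])
  have "(FF n has_real_derivative (0 + (a(n+1) - a n) * real N + Gc j tau0 (AA n) (BB n) (tt n x) * real N / (real N)^2)) (at x)"
    unfolding FF_def[abs_def] by (intro DERIV_add DERIV_const DERIV_cmult DERIV_cdivide dt cq)
  then show "(FF n has_real_derivative FF1 n x) (at x)"
    unfolding FF1_def using N0 by (simp add: power2_eq_square algebra_simps)
  have "(FF1 n has_real_derivative (0 + Pc j tau0 (AA n) (BB n) (tt n x) * real N / real N)) (at x)"
    unfolding FF1_def[abs_def] by (intro DERIV_add DERIV_const DERIV_cdivide cg)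
  then show "(FF1 n has_real_derivative FF2 n x) (at x)"
    unfolding FF2_def using N0 by simp
qed

lemma cell_props: assumes "1 \<le> n" "n+1 \<le> N"
  shows "(ff has_real_derivative ff1 x) (at x within {real n/real N..real (n+1)/real N})"
    "(ff1 has_real_derivative ff2 x) (at x within {real n/real N..real (n+1)/real N})"
    "continuous_on {real n/real N..real (n+1)/real N} ff2"
proof -
  let ?S = "{real n/real N..real (n+1)/real N}"
  show "(ff has_real_derivative ff1 x) (at x within ?S)"
  proof (cases "x \<in> ?S")
    case True
    have "(FF n has_real_derivative FF1 n x) (at x within ?S)"
      using dFF(1) by (rule has_field_derivative_at_within)
    then have "(ff has_real_derivative FF1 n x) (at x within ?S)"
      by (rule has_field_derivative_transform_within[where d=1]) (use True ci_cell[OF assms] in auto)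
    then show ?thesis using ci_cell[OF assms] True by auto
  qed (rule triv_deriv, auto)
  show "(ff1 has_real_derivative ff2 x) (at x within ?S)"
  proof (cases "x \<in> ?S")
    case True
    have "(FF1 n has_real_derivative FF2 n x) (at x within ?S)"
      using dFF(2) by (rule has_field_derivative_at_within)
    then have "(ff1 has_real_derivative FF2 n x) (at x within ?S)"
      by (rule has_field_derivative_transform_within[where d=1]) (use True ci_cell[OF assms] in auto)
    then show ?thesis using ci_cell[OF assms] True by auto
  qed (rule triv_deriv, auto)
  have "continuous_on ?S (FF2 n)"
    unfolding FF2_def[abs_def] Pc_def phiL_def phiR_def tt_def by (intro continuous_intros)
  then show "continuous_on ?S ff2"
    by (rule continuous_on_eq) (use ci_cell[OF assms] in auto)
qed

lemma union_props: "1 \<le> k \<Longrightarrow> k+1 \<le> N \<Longrightarrow>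
    (\<forall>x. (ff has_real_derivative ff1 x) (at x within {1/real N..real (k+1)/real N}) \<and>
        (ff1 has_real_derivative ff2 x) (at x within {1/real N..real (k+1)/real N})) \<and>
    continuous_on {1/real N..real (k+1)/real N} ff2"
proof (induction k)
  case 0 then show ?case by simp
next
  case (Suc k)
  show ?case
  proof (cases "k = 0")
    case True
    then show ?thesis using cell_props[of 1] Suc.prems by auto
  next
    case False
    then have IH: "(\<forall>x. (ff has_real_derivative ff1 x) (at x within {1/real N..real (k+1)/real N}) \<and>
        (ff1 has_real_derivative ff2 x) (at x within {1/real N..real (k+1)/real N})) \<and>
        continuous_on {1/real N..real (k+1)/real N} ff2" using Suc by auto
    have N0: "real N > 0" using Npos by simp
    have U: "{1/real N..real (Suc k+1)/real N} = {1/real N..real (k+1)/real N} \<union> {real (k+1)/real N..real (k+1+1)/real N}"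
      using ivl_disj_un_two_touch(4)[of "1/real N" "real (k+1)/real N" "real (k+1+1)/real N"] N0 Suc.prems
      by (auto simp: divide_simps)
    note cp = cell_props[of "k+1"]
    have c1: "1 \<le> k+1" "k+1+1 \<le> N" using Suc.prems by auto
    show ?thesis unfolding U
      using IH cp[OF c1] by (auto intro!: deriv_Un continuous_on_closed_Un)
  qed
qed

lemma all_props:
  "\<forall>x\<in>{1 / real N..1}.
     (ff has_real_derivative ff1 x) (at x within {1 / real N..1}) \<and>
     (ff1 has_real_derivative ff2 x) (at x within {1 / real N..1})"
  "continuous_on {1 / real N..1} ff2"
proof -
  have N0: "real N > 0" using Npos by simp
  have e: "real (N-1+1) / real N = 1" using N3 N0 by simp
  from union_props[of "N-1"] N3 show "\<forall>x\<in>{1 / real N..1}.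
     (ff has_real_derivative ff1 x) (at x within {1 / real N..1}) \<and>
     (ff1 has_real_derivative ff2 x) (at x within {1 / real N..1})" "continuous_on {1 / real N..1} ff2"
    unfolding e by auto
qed

lemma interp: "1 \<le> n \<Longrightarrow> n \<le> N \<Longrightarrow> ff (real n / real N) = a n"
proof -
  assume n: "1 \<le> n" "n \<le> N"
  have N0: "real N > 0" using Npos by simp
  show ?thesis
  proof (cases "n = N")
    case True
    have m: "1 \<le> N-1" "N-1+1 \<le> N" using N3 by auto
    have x: "real (N-1)/real N \<le> real n / real N" "real n / real N \<le> real (N-1+1)/real N"
      using True N0 N3 by (auto simp: divide_simps)
    have t: "tt (N-1) (real n / real N) = 1" unfolding tt_def using True N0 N3 by (simp add: of_nat_diff)
    have e: "N - 1 + 1 = N" using N3 by simp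
    have "ff (real n / real N) = FF (N-1) (real n / real N)" by (rule ci_cell(1)[OF m x])
    also have "\<dots> = a (N-1) + (a (N-1+1) - a (N-1))" unfolding FF_def t cellN(2)[OF m] by simp
    also have "\<dots> = a n" unfolding e True by simp
    finally show ?thesis .
  next
    case False
    have m: "1 \<le> n" "n+1 \<le> N" using n False by auto
    have x: "real n/real N \<le> real n / real N" "real n / real N \<le> real (n+1)/real N"
      using N0 by (auto simp: divide_simps)
    have t: "tt n (real n / real N) = 0" unfolding tt_def using N0 by simp
    have "ff (real n / real N) = FF n (real n / real N)" by (rule ci_cell(1)[OF m x])
    also have "\<dots> = a n" unfolding FF_def t cellN(1)[OF m] by simp
    finally show ?thesis .
  qed
qed


lemma bounds: assumes x: "x \<in> {1/real N..1}"
  shows "1/(KK C j) \<le> ff1 x" "ff1 x \<le> (KK C j)" "1/(KK C j) \<le> ff2 x" "ff2 x \<le> (KK C j)"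
proof -
  have N0: "real N > 0" using Npos by simp
  obtain n where n: "1 \<le> n" "n+1 \<le> N" "real n / real N \<le> x" "x \<le> real (n+1)/real N"
  proof -
    define k where "k = nat \<lfloor>real N * x\<rfloor>"
    have xs: "1 \<le> real N * x" "real N * x \<le> real N" using x N0 by (auto simp: divide_simps mult.commute)
    have k1: "1 \<le> k" unfolding k_def using xs by linarith
    show ?thesis
    proof (cases "k + 1 \<le> N")
      case True
      have f0: "0 \<le> \<lfloor>real N * x\<rfloor>" using xs by linarith
      have rk: "real k = real_of_int \<lfloor>real N * x\<rfloor>" unfolding k_def using f0 by simp
      have r: "real k \<le> real N * x" "real N * x \<le> real k + 1" unfolding rk
        using of_int_floor_le[of "real N * x"] real_of_int_floor_add_one_gt[of "real N * x"] by linarith+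
      show ?thesis
      proof (rule that[of k])
        show "1 \<le> k" "k + 1 \<le> N" using k1 True by auto
        show "real k / real N \<le> x" using r N0 by (simp add: divide_simps mult.commute)
        show "x \<le> real (k+1) / real N" using r N0 by (simp add: divide_simps mult.commute)
      qed
    next
      case False
      then have "real N * x = real N" using xs unfolding k_def by linarith
      then have "x = 1" using N0 by simp
      then show ?thesis using that[of "N-1"] N3 N0 by (simp add: divide_simps of_nat_diff)
    qed
  qed
  note cc = ci_cell[OF n]
  have t: "0 \<le> tt n x" "tt n x \<le> 1" unfolding tt_def using n(3,4) N0 by (simp_all add: divide_simps mult.commute)
  note cb = cellN[OF n(1,2)]
  note ab = AB_bounds[OF n(1,2)]
  note db = d_bounds[OF n(1,2)]
  have C0: "C > 0" using C4 by simp
  have jj: "(real j+1)*(real j+2) \<ge> 1" by (simp add: algebra_simps)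
  have K2: "(KK C j) \<ge> 2*C" unfolding KK_def using C0 by simp
  have iK: "1/(KK C j) \<le> 1/(2*C)" using K2 C0 by (simp add: frac_le)
  have t0: "tau0 = 1/(2*C)" unfolding tau0_def ..
  show "1/(KK C j) \<le> ff2 x" using cc(3) cb(7)[OF t] iK t0 unfolding FF2_def by simp
  have "ff2 x \<le> tau0 + (AA n + BB n)*(real j+1)*(real j+2)/2" using cc(3) cb(8)[OF t] unfolding FF2_def by simp
  also have "\<dots> \<le> 1/(2*C) + C*(real j+1)*(real j+2)"
  proof -
    have "(AA n + BB n)*((real j+1)*(real j+2)) \<le> (2*C)*((real j+1)*(real j+2))"
      using ab by (intro mult_right_mono) auto
    then show ?thesis using t0 by (simp add: algebra_simps)
  qed
  also have "\<dots> \<le> (KK C j)"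
  proof -
    have "1/(2*C) \<le> 1" using C4 by simp
    then show ?thesis unfolding KK_def using C4 by linarith
  qed
  finally show "ff2 x \<le> (KK C j)" .
  have g1: "-AA n/2 \<le> Gc j tau0 (AA n) (BB n) (tt n x)" "Gc j tau0 (AA n) (BB n) (tt n x) \<le> BB n/2"
    using cb(9,10)[OF t] by auto
  have "Gc j tau0 (AA n) (BB n) (tt n x) / real N \<le> (BB n/2) / real N"
    using divide_right_mono[OF g1(2), of "real N"] N0 by simp
  also have "\<dots> \<le> BB n / 2"
  proof -
    have "0 < 1/C" using C0 by simp
    then have bb0: "BB n \<ge> 0" using ab(3) by linarith
    have "BB n * 1 \<le> BB n * real N" using Npos bb0 by (intro mult_left_mono) auto
    then show ?thesis using N0 by (simp add: divide_simps)
  qed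
  also have "\<dots> \<le> C" using ab C0 by simp
  finally have "ff1 x \<le> real N * (a(n+1) - a n) + C" using cc(2) unfolding FF1_def by simp
  then show "ff1 x \<le> (KK C j)" using db K2 by linarith
  have low: "ff1 x \<ge> real N * (a(n+1) - a n) - AA n/2/real N"
    using cc(2) divide_right_mono[OF g1(1), of "real N"] N0 unfolding FF1_def by simp
  show "1/(KK C j) \<le> ff1 x"
  proof (cases "n = 1")
    case True
    then have "AA n = 1/C" unfolding AA_def by simp
    then have "AA n/2/real N \<le> 1/(2*C)" using N0 Npos C0 by (simp add: divide_simps)
    then show ?thesis using low db iK by simp
  next
    case False
    then have A: "AA n = ee (n-1)" unfolding AA_def by simp
    have n1: "n - 1 + 1 = n" "n - 1 + 2 = n + 1" using n by auto
    have "AA n / 2 / real N = real N * ((a (n+1) - a n) - (a n - a (n-1)))/2"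
      unfolding A ee_def n1 using N0 by (simp add: power2_eq_square)
    then have "ff1 x \<ge> (real N * (a(n+1) - a n) + real N * (a n - a (n-1)))/2" using low
      by (simp add: algebra_simps)
    moreover have "1/C \<le> real N * (a (n-1+1) - a (n-1))" using d_bounds[of "n-1"] n False by auto
    ultimately have "ff1 x \<ge> 1/C" using db n1 by simp
    moreover have "1/(2*C) \<le> 1/C" using C0 by (simp add: divide_simps)
    ultimately show ?thesis using iK by linarith
  qed
qed

lemma construction:
  "\<exists>f f' f'' :: real \<Rightarrow> real.
         (\<forall>x\<in>{1 / real N..1}.
            (f has_real_derivative f' x) (at x within {1 / real N..1}) \<and>
            (f' has_real_derivative f'' x) (at x within {1 / real N..1})) \<and>
         continuous_on {1 / real N..1} f'' \<and>
         (\<forall>n. 1 \<le> n \<and> n \<le> N \<longrightarrow> f (real n / real N) = a n) \<and>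
         (\<forall>x\<in>{1 / real N..1}.
            1 / (KK C j) \<le> f' x \<and> f' x \<le> (KK C j) \<and> 1 / (KK C j) \<le> f'' x \<and> f'' x \<le> (KK C j))"
  using all_props interp bounds by blast

end



theorem corollary1:
  fixes C :: real
  assumes "C \<ge> 4"
  shows "\<exists>K::real. K \<ge> 1 \<and>
    (\<forall>(N::nat) (a::nat \<Rightarrow> real). N \<ge> 3 \<and> unif_convex C N a \<longrightarrow>
      (\<exists>f f' f'' :: real \<Rightarrow> real.
         (\<forall>x\<in>{1 / real N..1}.
            (f has_real_derivative f' x) (at x within {1 / real N..1}) \<and>
            (f' has_real_derivative f'' x) (at x within {1 / real N..1})) \<and>
         continuous_on {1 / real N..1} f'' \<and>
         (\<forall>n. 1 \<le> n \<and> n \<le> N \<longrightarrow> f (real n / real N) = a n) \<and>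
         (\<forall>x\<in>{1 / real N..1}.
            1 / K \<le> f' x \<and> f' x \<le> K \<and> 1 / K \<le> f'' x \<and> f'' x \<le> K)))"
proof (rule exI[where x="KK C (nat \<lceil>4*C^2\<rceil>)"], intro conjI allI impI)
  let ?j = "nat \<lceil>4*C^2\<rceil>"
  have "0 \<le> C*(real ?j+1)*(real ?j+2)" using assms of_nat_0_le_iff[of ?j] by (intro mult_nonneg_nonneg; linarith)
  then show "1 \<le> KK C ?j" unfolding KK_def using assms by linarith
  fix N :: nat and a :: "nat \<Rightarrow> real"
  assume h: "3 \<le> N \<and> unif_convex C N a"
  show "\<exists>f f' f'' :: real \<Rightarrow> real.
         (\<forall>x\<in>{1 / real N..1}.
            (f has_real_derivative f' x) (at x within {1 / real N..1}) \<and>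
            (f' has_real_derivative f'' x) (at x within {1 / real N..1})) \<and>
         continuous_on {1 / real N..1} f'' \<and>
         (\<forall>n. 1 \<le> n \<and> n \<le> N \<longrightarrow> f (real n / real N) = a n) \<and>
         (\<forall>x\<in>{1 / real N..1}.
            1 / KK C ?j \<le> f' x \<and> f' x \<le> KK C ?j \<and> 1 / KK C ?j \<le> f'' x \<and> f'' x \<le> KK C ?j)"
    using construction[of C N a ?j] assms h by blast
qed

end
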